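(* Let $\Omega\subset\mathbb{R}^n$ be open and bounded, $m>n$, $Y^m\subset\mathbb{R}^m$ a parallelotope, $1<p<\infty$, and let $\mathbf{R}\in\mathbb{R}^{m\times n}$ satisfy $\mathbf{R}^*k\neq0$ for all $k\in\mathbb{Z}^m\setminus\{0\}$. Let $f:\Omega\times\mathbb{R}^m\times\mathbb{R}^d\to[0,\infty)$ be continuous and $Y^m$-periodic in its second variable, set $f_R(x,z,\xi):=f(x,\mathbf{R}z,\xi)$, and assume there is $C>0$ with $0\le f_R(x,z,\xi)\le C(1+|\xi|^p)$ for all $(x,z,\xi)\in\Omega\times\mathbb{R}^n\times\mathbb{R}^d$. Let $\{\varepsilon_n\}\subset(0,\infty)$ converge to $0$, and let $\{u_n\},\{w_n\}\subset L^p(\Omega;\mathbb{R}^d)$ be $p$-equiintegrable sequences with $\lim_{n\to\infty}\|u_n-w_n\|_{L^p(\Omega;\mathbb{R}^d)}=0$. Then $$\lim_{n\to\infty}\int_\Omega\Big[f_R\Big(x,\frac{x}{\varepsilon_n},u_n(x)\Big)-f_R\Big(x,\frac{x}{\varepsilon_n},w_n(x)\Big)\Big]\,dx=0.$$ *)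

theory Defs
  imports "HOL-Analysis.Analysis"
begin

definition parallelotope_rep :: "real^'m \<Rightarrow> real^'m^'m \<Rightarrow> (real^'m) set" where
  "parallelotope_rep y0 A = {y0 + A *v t | t. \<forall>i. 0 \<le> t$i \<and> t$i < 1}"

definition is_parallelotope :: "(real^'m) set \<Rightarrow> bool" where
  "is_parallelotope Y \<longleftrightarrow> (\<exists>y0 A. invertible A \<and> Y = parallelotope_rep y0 A)"

text \<open>Y-periodicity: invariance under translation by each edge vector of the
  parallelotope Y (hence by the whole lattice generated by them).\<close>
definition periodic_wrt :: "(real^'m) set \<Rightarrow> (real^'m \<Rightarrow> 'b) \<Rightarrow> bool" where
  "periodic_wrt Y g \<longleftrightarrow>
     (\<forall>y0 A. invertible A \<and> Y = parallelotope_rep y0 A \<longrightarrow>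
        (\<forall>z i. g (z + A *v axis i 1) = g z))"

definition in_Lp :: "(real^'n) set \<Rightarrow> real \<Rightarrow> (real^'n \<Rightarrow> real^'d) \<Rightarrow> bool" where
  "in_Lp \<Omega> p u \<longleftrightarrow> u \<in> borel_measurable (lebesgue_on \<Omega>) \<and>
     integrable (lebesgue_on \<Omega>) (\<lambda>x. norm (u x) powr p)"

definition Lp_norm :: "(real^'n) set \<Rightarrow> real \<Rightarrow> (real^'n \<Rightarrow> real^'d) \<Rightarrow> real" where
  "Lp_norm \<Omega> p u = (integral\<^sup>L (lebesgue_on \<Omega>) (\<lambda>x. norm (u x) powr p)) powr (1 / p)"

definition p_equiintegrable :: "(real^'n) set \<Rightarrow> real \<Rightarrow> (nat \<Rightarrow> real^'n \<Rightarrow> real^'d) \<Rightarrow> bool" where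
  "p_equiintegrable \<Omega> p U \<longleftrightarrow>
     (\<forall>e>0. \<exists>\<delta>>0. \<forall>E. E \<in> sets lebesgue \<and> E \<subseteq> \<Omega> \<and> measure lebesgue E < \<delta> \<longrightarrow>
        (\<forall>k. integral\<^sup>L (lebesgue_on E) (\<lambda>x. norm (U k x) powr p) < e))"

end

theory Submission
  imports Defs
begin


lemma periodic_int_shift:
  fixes g :: "real^'m \<Rightarrow> 'b" and A :: "real^'m^'m"
  assumes per: "\<forall>z i. g (z + A *v axis i 1) = g z"
  shows "(\<forall>i. v$i \<in> \<int>) \<Longrightarrow> g (z + A *v v) = g z"
proof -
  define L where "L = {v. \<forall>z. g (z + A *v v) = g z}"
  have add: "a + b \<in> L" if "a \<in> L" "b \<in> L" for a b
  proof -
    have "g (z + A *v (a + b)) = g z" for z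
    proof -
      have "z + A *v (a + b) = (z + A *v a) + A *v b"
        by (simp only: matrix_vector_right_distrib add.assoc)
      moreover have "g ((z + A *v a) + A *v b) = g (z + A *v a)" using that unfolding L_def by blast
      ultimately have "g (z + A *v (a + b)) = g (z + A *v a)" by (simp add: add.assoc)
      also have "\<dots> = g z" using that unfolding L_def by simp
      finally show ?thesis .
    qed
    then show ?thesis unfolding L_def by simp
  qed
  have neg: "- a \<in> L" if "a \<in> L" for a
  proof -
    have "g (z + A *v (- a)) = g z" for z
    proof -
      have "g (z + A *v (- a)) = g (z + A *v (- a) + A *v a)"
        using that unfolding L_def by simp
      also have "z + A *v (- a) + A *v a = z"
      proof -
        have "A *v (- a) + A *v a = A *v (- a + a)" by (simp only: matrix_vector_right_distrib)
        then have "A *v (- a) + A *v a = 0" by simp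
        then show ?thesis by (simp only: add.assoc add_0_right)
      qed
      finally show ?thesis .
    qed
    then show ?thesis unfolding L_def by simp
  qed
  have natc: "of_nat k *\<^sub>R axis i 1 \<in> L" for k :: nat and i
  proof (induction k)
    case 0 then show ?case unfolding L_def by simp
  next
    case (Suc k)
    have "axis i 1 \<in> L" using per unfolding L_def by simp
    from add[OF Suc this] show ?case by (simp add: algebra_simps)
  qed
  have intc: "of_int k *\<^sub>R axis i 1 \<in> L" for k :: int and i
  proof (cases "k \<ge> 0")
    case True
    then obtain n where "k = int n" using nonneg_int_cases by blast
    then show ?thesis using natc[of n i] by simp
  next
    case False
    then have "k = - int (nat (- k))" by simp
    then obtain n where "k = - int n" by blast
    then show ?thesis using neg[OF natc[of n i]] by simp
  qed
  assume vi: "\<forall>i. v$i \<in> \<int>"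
  have "finite S \<Longrightarrow> (\<Sum>i\<in>S. v$i *s axis i 1) \<in> L" for S
  proof (induction S rule: finite_induct)
    case empty then show ?case unfolding L_def by simp
  next
    case (insert i S)
    obtain k where "v$i = of_int k" using vi by (meson Ints_cases)
    then have "v$i *s axis i 1 \<in> L" using intc[of k i] by (simp add: scalar_mult_eq_scaleR)
    moreover have "(\<Sum>j\<in>insert i S. v$j *s axis j 1) = v$i *s axis i 1 + (\<Sum>j\<in>S. v$j *s axis j 1)"
      using insert(1,2) by simp
    ultimately show ?case using add[OF _ insert(3)] by simp
  qed
  from this[of UNIV] have "v \<in> L" by (simp add: basis_expansion)
  then show ?thesis unfolding L_def by simp
qed

lemma periodic_reduce:
  fixes Y :: "(real^'m) set"
  assumes "is_parallelotope Y"
  obtains P :: "(real^'m) set" where "compact P"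
    and "\<And>z. \<exists>z'\<in>P. \<forall>g :: real^'m \<Rightarrow> 'b. periodic_wrt Y g \<longrightarrow> g z = g z'"
proof -
  obtain y0 A where inv: "invertible A" and Y: "Y = parallelotope_rep y0 A"
    using assms unfolding is_parallelotope_def by blast
  obtain A' where AA': "A ** A' = mat 1" using inv unfolding invertible_def by blast
  define P where "P = (\<lambda>t. y0 + A *v t) ` cbox 0 (\<chi> i. 1)"
  have "compact P" unfolding P_def
    by (intro compact_continuous_image compact_cbox continuous_intros)
  moreover have "\<exists>z'\<in>P. \<forall>g :: real^'m \<Rightarrow> 'b. periodic_wrt Y g \<longrightarrow> g z = g z'" for z
  proof -
    define t where "t = A' *v (z - y0)"
    define v :: "real^'m" where "v = (\<chi> i. of_int \<lfloor>t$i\<rfloor>)"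
    define z' where "z' = y0 + A *v (t - v)"
    have "A *v t = z - y0" unfolding t_def by (simp add: matrix_vector_mul_assoc AA')
    then have zz: "z = z' + A *v v" unfolding z'_def
      by (simp add: matrix_vector_mult_diff_distrib)
    have "t - v \<in> cbox 0 (\<chi> i. 1)"
      unfolding v_def by (auto simp: mem_box_cart intro: less_imp_le frac_lt_1[unfolded frac_def])
    then have "z' \<in> P" unfolding P_def z'_def by blast
    moreover have "g z = g z'" if "periodic_wrt Y g" for g :: "real^'m \<Rightarrow> 'b"
    proof -
      have "\<forall>z i. g (z + A *v axis i 1) = g z"
        using that inv Y unfolding periodic_wrt_def by blast
      from periodic_int_shift[OF this, of v z'] show ?thesis unfolding zz v_def by simp
    qed
    ultimately show ?thesis by blast
  qed
  ultimately show ?thesis using that by blast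
qed



lemma lebesgue_on_sub:
  fixes g :: "'a::euclidean_space \<Rightarrow> real"
  assumes "\<Omega> \<in> sets lebesgue" "E \<subseteq> \<Omega>" "E \<in> sets lebesgue"
  shows "integral\<^sup>L (lebesgue_on E) g = (\<integral>x. indicator E x * g x \<partial>lebesgue_on \<Omega>)"
    and "measure (lebesgue_on \<Omega>) E = measure lebesgue E"
    and "E \<in> sets (lebesgue_on \<Omega>)"
proof -
  show E: "E \<in> sets (lebesgue_on \<Omega>)" using assms by (simp add: sets_restrict_space_iff)
  have "lebesgue_on E = restrict_space (lebesgue_on \<Omega>) E"
    using assms by (simp add: restrict_restrict_space Int_absorb1)
  moreover have "E \<inter> space (lebesgue_on \<Omega>) \<in> sets (lebesgue_on \<Omega>)" using E assms by (simp add: Int_absorb2)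
  ultimately show "integral\<^sup>L (lebesgue_on E) g = (\<integral>x. indicator E x * g x \<partial>lebesgue_on \<Omega>)"
    using integral_restrict_space[of E "lebesgue_on \<Omega>" g] by simp
  show "measure (lebesgue_on \<Omega>) E = measure lebesgue E" using assms by (simp add: measure_restrict_space)
qed

lemma small_cover:
  fixes \<Omega> :: "'a::euclidean_space set"
  assumes "bounded \<Omega>" "\<delta> > 0"
  obtains \<B> where "finite \<B>" "\<And>B. B \<in> \<B> \<Longrightarrow> B \<in> lmeasurable \<and> measure lebesgue B < \<delta>"
    "\<Omega> \<subseteq> \<Union>\<B>"
proof -
  define \<rho> where "\<rho> = min (1/4) (\<delta>/4)"
  have \<rho>: "\<rho> > 0" "2*\<rho> \<le> 1" "2*\<rho> < \<delta>" using assms unfolding \<rho>_def by auto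
  define bx where "bx x = box (x - \<rho> *\<^sub>R One) (x + \<rho> *\<^sub>R One)" for x :: 'a
  have mb: "measure lebesgue (bx x) < \<delta>" for x
  proof -
    have "measure lebesgue (bx x) = (\<Prod>i\<in>(Basis::'a set). 2*\<rho>)"
      unfolding bx_def using \<rho> by (simp add: measure_lborel_box_eq algebra_simps inner_simps)
    also have "\<dots> = (2*\<rho>)^DIM('a)" by simp
    also have "\<dots> \<le> (2*\<rho>)^1" by (rule power_decreasing) (use \<rho> DIM_positive in auto)
    also have "\<dots> < \<delta>" using \<rho> by simp
    finally show ?thesis .
  qed
  have "compact (closure \<Omega>)" using assms(1) by (simp add: compact_closure)
  moreover have cov: "closure \<Omega> \<subseteq> \<Union>(bx ` closure \<Omega>)"
  proof
    fix x assume "x \<in> closure \<Omega>"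
    moreover have "x \<in> bx x" unfolding bx_def using \<rho> by (simp add: mem_box inner_simps)
    ultimately show "x \<in> \<Union>(bx ` closure \<Omega>)" by blast
  qed
  ultimately have "\<exists>C. C \<subseteq> closure \<Omega> \<and> finite C \<and> closure \<Omega> \<subseteq> \<Union>(bx ` C)"
    by (metis compactE_image open_box bx_def)
  then obtain C where C: "C \<subseteq> closure \<Omega>" "finite C" "closure \<Omega> \<subseteq> \<Union>(bx ` C)" by blast
  show thesis
  proof (rule that[of "bx ` C"])
    show "finite (bx ` C)" using C by simp
    show "B \<in> lmeasurable \<and> measure lebesgue B < \<delta>" if "B \<in> bx ` C" for B
      using that mb by (auto simp: bx_def)
    show "\<Omega> \<subseteq> \<Union>(bx ` C)" using C closure_subset by blast
  qed
qed

lemma cheb: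
  fixes g :: "'a \<Rightarrow> real"
  assumes "finite_measure M" "integrable M g" "S \<in> sets M" "\<And>x. x \<in> S \<Longrightarrow> c \<le> g x"
    "\<And>x. x \<in> space M \<Longrightarrow> 0 \<le> g x" "0 \<le> c"
  shows "c * measure M S \<le> integral\<^sup>L M g"
proof -
  have fin: "emeasure M S < \<infinity>" using assms(1,3) finite_measure.emeasure_finite by (auto simp: top.not_eq_extremum)
  have SS: "S \<inter> space M = S" using assms(3) sets.sets_into_space by blast
  have "c * measure M S = (\<integral>x. indicator S x * c \<partial>M)" using SS by simp
  also have "\<dots> \<le> integral\<^sup>L M g"
  proof (rule integral_mono)
    show "integrable M (\<lambda>x. indicator S x * c)"
      using integrable_real_indicator[OF assms(3) fin] by simp
    show "integrable M g" by fact
    show "indicator S x * c \<le> g x" if "x \<in> space M" for x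
      using assms(4,5,6) that by (auto split: split_indicator)
  qed
  finally show ?thesis .
qed

lemma meas_comp:
  fixes f :: "'a::euclidean_space \<Rightarrow> 'b::euclidean_space \<Rightarrow> 'c::euclidean_space \<Rightarrow> real"
  assumes "open \<Omega>" "continuous_on (\<Omega> \<times> UNIV \<times> UNIV) (\<lambda>(x, z, \<xi>). f x z \<xi>)"
    and "\<Omega> \<in> sets lebesgue"
    and "y \<in> borel_measurable (lebesgue_on \<Omega>)" "v \<in> borel_measurable (lebesgue_on \<Omega>)"
  shows "(\<lambda>x. f x (y x) (v x)) \<in> borel_measurable (lebesgue_on \<Omega>)"
proof -
  define A :: "('a \<times> 'b \<times> 'c) set" where "A = \<Omega> \<times> UNIV \<times> UNIV"
  define F where "F q = (if q \<in> A then (case q of (x,z,\<xi>) \<Rightarrow> f x z \<xi>) else 0)" for q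
  have "F \<in> borel_measurable borel" unfolding F_def
    by (rule borel_measurable_continuous_on_if)
       (use assms in \<open>auto intro: borel_open open_Times simp: A_def\<close>)
  moreover have "(\<lambda>x. (x, y x, v x)) \<in> borel_measurable (lebesgue_on \<Omega>)"
  proof -
    have "(\<lambda>x. x) \<in> borel_measurable (lebesgue_on \<Omega>)"
      by (rule continuous_imp_measurable_on_sets_lebesgue[OF continuous_on_id assms(3)])
    then show ?thesis unfolding borel_prod[symmetric] using assms(4,5) by (intro measurable_Pair) auto
  qed
  ultimately have "(\<lambda>x. F (x, y x, v x)) \<in> borel_measurable (lebesgue_on \<Omega>)"
    using measurable_compose by blast
  then show ?thesis
    by (rule measurable_cong[THEN iffD1, rotated]) (simp add: F_def A_def)
qed

lemma unif_cont_xi: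
  fixes f :: "'a::euclidean_space \<Rightarrow> 'b::euclidean_space \<Rightarrow> 'c::euclidean_space \<Rightarrow> real"
  assumes "continuous_on (\<Omega> \<times> UNIV \<times> UNIV) (\<lambda>(x, z, \<xi>). f x z \<xi>)" "compact K" "K \<subseteq> \<Omega>"
    "compact P" "e > 0"
  obtains \<eta> where "\<eta> > 0" "\<And>x z \<xi> \<xi>'. x \<in> K \<Longrightarrow> z \<in> P \<Longrightarrow> norm \<xi> \<le> Mb \<Longrightarrow> norm \<xi>' \<le> Mb
     \<Longrightarrow> dist \<xi> \<xi>' < \<eta> \<Longrightarrow> \<bar>f x z \<xi> - f x z \<xi>'\<bar> < e"
proof -
  let ?S = "K \<times> P \<times> cball (0::'c) Mb"
  let ?F = "\<lambda>(x, z, \<xi>). f x z \<xi>"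
  have "compact ?S" by (intro compact_Times compact_cball assms)
  moreover have "continuous_on ?S ?F" by (rule continuous_on_subset[OF assms(1)]) (use assms in auto)
  ultimately have "uniformly_continuous_on ?S ?F" using compact_uniformly_continuous by blast
  then obtain \<eta> where "\<eta> > 0" and H: "\<forall>a\<in>?S. \<forall>b\<in>?S. dist b a < \<eta> \<longrightarrow> dist (?F b) (?F a) < e"
    unfolding uniformly_continuous_on_def using assms(5) by metis
  show thesis
  proof (rule that[OF \<open>\<eta> > 0\<close>])
    fix x z and \<xi> \<xi>' :: 'c assume a: "x \<in> K" "z \<in> P" "norm \<xi> \<le> Mb" "norm \<xi>' \<le> Mb" "dist \<xi> \<xi>' < \<eta>"
    have "dist (x, z, \<xi>) (x, z, \<xi>') < \<eta>" using a by (simp add: dist_Pair_Pair)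
    then have "dist (?F (x, z, \<xi>)) (?F (x, z, \<xi>')) < e" using H a by auto
    then show "\<bar>f x z \<xi> - f x z \<xi>'\<bar> < e" by (simp add: dist_real_def)
  qed
qed


lemma ui_bound:
  fixes \<Omega> :: "'a::euclidean_space set" and G :: "nat \<Rightarrow> 'a \<Rightarrow> real"
  assumes \<Omega>: "\<Omega> \<in> sets lebesgue" "bounded \<Omega>"
    and Gi: "\<And>k. integrable (lebesgue_on \<Omega>) (G k)" and G0: "\<And>k x. x \<in> \<Omega> \<Longrightarrow> 0 \<le> G k x"
    and EI: "\<exists>\<delta>>0. \<forall>E. E \<in> sets lebesgue \<and> E \<subseteq> \<Omega> \<and> measure lebesgue E < \<delta> \<longrightarrow>
               (\<forall>k. integral\<^sup>L (lebesgue_on E) (G k) < 1)"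
  shows "\<exists>B. \<forall>k. integral\<^sup>L (lebesgue_on \<Omega>) (G k) \<le> B"
proof -
  obtain \<delta> where \<delta>: "\<delta> > 0" and H: "\<And>E k. E \<in> sets lebesgue \<Longrightarrow> E \<subseteq> \<Omega> \<Longrightarrow> measure lebesgue E < \<delta>
      \<Longrightarrow> integral\<^sup>L (lebesgue_on E) (G k) < 1"
    using EI by blast
  obtain \<B> where fin: "finite \<B>" and B: "\<And>B. B \<in> \<B> \<Longrightarrow> B \<in> lmeasurable \<and> measure lebesgue B < \<delta>"
    and cov: "\<Omega> \<subseteq> \<Union>\<B>"
    using small_cover[OF \<Omega>(2) \<delta>] by blast
  have ss: "\<Omega> \<inter> B \<in> sets (lebesgue_on \<Omega>)" "\<Omega> \<inter> B \<in> sets lebesgue" if "B \<in> \<B>" for B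
    using B[OF that] \<Omega> by (auto simp: sets_restrict_space_iff fmeasurableD)
  have "integral\<^sup>L (lebesgue_on \<Omega>) (G k) \<le> real (card \<B>)" for k
  proof -
    have ii: "integrable (lebesgue_on \<Omega>) (\<lambda>x. indicator (\<Omega> \<inter> B) x * G k x)" if "B \<in> \<B>" for B
      using integrable_mult_indicator[OF ss(1)[OF that] Gi[of k]] by simp
    have "integral\<^sup>L (lebesgue_on \<Omega>) (G k) \<le>
        (\<integral>x. (\<Sum>B\<in>\<B>. indicator (\<Omega> \<inter> B) x * G k x) \<partial>lebesgue_on \<Omega>)"
    proof (rule integral_mono)
      show "integrable (lebesgue_on \<Omega>) (G k)" by (rule Gi)
      show "integrable (lebesgue_on \<Omega>) (\<lambda>x. \<Sum>B\<in>\<B>. indicator (\<Omega> \<inter> B) x * G k x)"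
        using Bochner_Integration.integrable_sum[where f="\<lambda>B x. indicator (\<Omega> \<inter> B) x * G k x" and I="\<B>", OF ii] by simp
      fix x assume x: "x \<in> space (lebesgue_on \<Omega>)"
      then have x\<Omega>: "x \<in> \<Omega>" by simp
      then obtain B0 where B0: "B0 \<in> \<B>" "x \<in> B0" using cov by blast
      have "G k x = indicator (\<Omega> \<inter> B0) x * G k x" using B0 x\<Omega> by simp
      also have "\<dots> \<le> (\<Sum>B\<in>\<B>. indicator (\<Omega> \<inter> B) x * G k x)"
        by (rule member_le_sum[OF B0(1)]) (use fin G0[OF x\<Omega>] in auto)
      finally show "G k x \<le> (\<Sum>B\<in>\<B>. indicator (\<Omega> \<inter> B) x * G k x)" .
    qed
    also have "\<dots> = (\<Sum>B\<in>\<B>. (\<integral>x. indicator (\<Omega> \<inter> B) x * G k x \<partial>lebesgue_on \<Omega>))"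
      using Bochner_Integration.integral_sum[where f="\<lambda>B x. indicator (\<Omega> \<inter> B) x * G k x" and I="\<B>", OF ii] by simp
    also have "\<dots> \<le> (\<Sum>B\<in>\<B>. 1)"
    proof (rule sum_mono)
      fix B assume b: "B \<in> \<B>"
      have "(\<integral>x. indicator (\<Omega> \<inter> B) x * G k x \<partial>lebesgue_on \<Omega>) = integral\<^sup>L (lebesgue_on (\<Omega> \<inter> B)) (G k)"
        using lebesgue_on_sub(1)[OF \<Omega>(1) _ ss(2)[OF b]] by simp
      also have "\<dots> < 1"
      proof (rule H)
        show "\<Omega> \<inter> B \<in> sets lebesgue" by (rule ss(2)[OF b])
        have "measure lebesgue (\<Omega> \<inter> B) \<le> measure lebesgue B"
          using B[OF b] ss(2)[OF b] by (intro measure_mono_fmeasurable) auto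
        then show "measure lebesgue (\<Omega> \<inter> B) < \<delta>" using B[OF b] by linarith
      qed auto
      finally show "(\<integral>x. indicator (\<Omega> \<inter> B) x * G k x \<partial>lebesgue_on \<Omega>) \<le> 1" by simp
    qed
    also have "\<dots> = real (card \<B>)" by simp
    finally show ?thesis .
  qed
  then show ?thesis by blast
qed


lemma pw_ineq:
  fixes a b c p :: real
  assumes "0 \<le> a" "0 \<le> b" "0 \<le> c" "c \<le> a + b" "0 < p"
  shows "c powr p \<le> 2 powr p * (a powr p + b powr p)"
proof -
  have "c \<le> 2 * max a b" using assms by linarith
  then have "c powr p \<le> (2 * max a b) powr p" using assms by (intro powr_mono2) auto
  also have "\<dots> = 2 powr p * max a b powr p" using assms by (simp add: powr_mult)
  also have "max a b powr p \<le> a powr p + b powr p"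
    by (cases "a \<le> b") (auto simp: max_def)
  then have "2 powr p * max a b powr p \<le> 2 powr p * (a powr p + b powr p)" by simp
  finally show ?thesis .
qed
theorem lemma4p2:
  fixes \<Omega> :: "(real^'n) set" and Y :: "(real^'m) set"
    and R :: "real^'n^'m" and p C :: real
    and f :: "real^'n \<Rightarrow> real^'m \<Rightarrow> real^'d \<Rightarrow> real"
    and eps :: "nat \<Rightarrow> real" and u w :: "nat \<Rightarrow> real^'n \<Rightarrow> real^'d"
  assumes "open \<Omega>" and "bounded \<Omega>"
    and "CARD('m) > CARD('n)"
    and "is_parallelotope Y"
    and "1 < p"
    and "\<forall>k::real^'m. (\<forall>i. k$i \<in> \<int>) \<and> k \<noteq> 0 \<longrightarrow> transpose R *v k \<noteq> 0"
    and "continuous_on (\<Omega> \<times> UNIV \<times> UNIV) (\<lambda>(x, z, \<xi>). f x z \<xi>)"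
    and "\<forall>x\<in>\<Omega>. \<forall>z \<xi>. 0 \<le> f x z \<xi>"
    and "\<forall>x\<in>\<Omega>. \<forall>\<xi>. periodic_wrt Y (\<lambda>z. f x z \<xi>)"
    and "C > 0"
    and "\<forall>x\<in>\<Omega>. \<forall>z \<xi>. 0 \<le> f x (R *v z) \<xi> \<and> f x (R *v z) \<xi> \<le> C * (1 + norm \<xi> powr p)"
    and "\<forall>k. eps k > 0" and "eps \<longlonglongrightarrow> 0"
    and "\<forall>k. in_Lp \<Omega> p (u k)" and "\<forall>k. in_Lp \<Omega> p (w k)"
    and "p_equiintegrable \<Omega> p u" and "p_equiintegrable \<Omega> p w"
    and "(\<lambda>k. Lp_norm \<Omega> p (\<lambda>x. u k x - w k x)) \<longlonglongrightarrow> 0"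
  shows "(\<lambda>k. integral\<^sup>L (lebesgue_on \<Omega>)
            (\<lambda>x. f x (R *v ((1 / eps k) *\<^sub>R x)) (u k x)
               - f x (R *v ((1 / eps k) *\<^sub>R x)) (w k x))) \<longlonglongrightarrow> 0"
proof -
  define M where "M = lebesgue_on \<Omega>"
  have \<Omega>l: "\<Omega> \<in> lmeasurable" using lmeasurable_open assms(1,2) by blast
  have \<Omega>s: "\<Omega> \<in> sets lebesgue" using \<Omega>l by (simp add: fmeasurableD)
  have spM: "space M = \<Omega>" unfolding M_def by simp
  have finM: "finite_measure M"
  proof (rule finite_measureI)
    have "emeasure M (space M) = emeasure lebesgue \<Omega>"
      unfolding spM unfolding M_def using \<Omega>s by (simp add: emeasure_restrict_space)
    then show "emeasure M (space M) \<noteq> \<infinity>" using fmeasurableD2[OF \<Omega>l] by (metis infinity_ennreal_def)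
  qed
  have mM: "measure M E = measure lebesgue E" if "E \<subseteq> \<Omega>" "E \<in> sets lebesgue" for E
    unfolding M_def using lebesgue_on_sub(2)[OF \<Omega>s that] .
  have sM: "E \<in> sets M \<longleftrightarrow> E \<subseteq> \<Omega> \<and> E \<in> sets lebesgue" for E
    unfolding M_def using \<Omega>s by (simp add: sets_restrict_space_iff)
  have p0: "p > 0" using assms(5) by simp

  obtain P :: "(real^'m) set" where P: "compact P"
    and per: "\<And>z. \<exists>z'\<in>P. \<forall>g :: real^'m \<Rightarrow> real. periodic_wrt Y g \<longrightarrow> g z = g z'"
    using periodic_reduce[OF assms(4)] by blast
  have fper: "\<exists>z'\<in>P. \<forall>x\<in>\<Omega>. \<forall>\<xi>. f x z \<xi> = f x z' \<xi>" for z
  proof -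
    obtain z' where "z' \<in> P" and z': "\<forall>g :: real^'m \<Rightarrow> real. periodic_wrt Y g \<longrightarrow> g z = g z'"
      using per by blast
    then show ?thesis using assms(9) by blast
  qed

  define y where "y k x = R *v ((1 / eps k) *\<^sub>R x)" for k x
  have ym: "y k \<in> borel_measurable M" for k
    unfolding M_def y_def
    by (rule continuous_imp_measurable_on_sets_lebesgue[OF _ \<Omega>s])
       (intro bounded_linear.continuous_on[OF matrix_vector_mul_bounded_linear] continuous_intros)
  have um: "u k \<in> borel_measurable M" and upi: "integrable M (\<lambda>x. norm (u k x) powr p)" for k
    using assms(14) unfolding M_def in_Lp_def by auto
  have wm: "w k \<in> borel_measurable M" and wpi: "integrable M (\<lambda>x. norm (w k x) powr p)" for k
    using assms(15) unfolding M_def in_Lp_def by auto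
  have fum: "(\<lambda>x. f x (y k x) (u k x)) \<in> borel_measurable M" for k
    using meas_comp[OF assms(1,7) \<Omega>s, of "y k" "u k"] ym um unfolding M_def by blast
  have fwm: "(\<lambda>x. f x (y k x) (w k x)) \<in> borel_measurable M" for k
    using meas_comp[OF assms(1,7) \<Omega>s, of "y k" "w k"] ym wm unfolding M_def by blast
  define h where "h k x = f x (y k x) (u k x) - f x (y k x) (w k x)" for k x
  have fb: "0 \<le> f x (y k x) \<xi> \<and> f x (y k x) \<xi> \<le> C * (1 + norm \<xi> powr p)" if "x \<in> \<Omega>" for k x \<xi>
    using assms(11) that unfolding y_def by blast
  have hb: "\<bar>h k x\<bar> \<le> C * (1 + norm (u k x) powr p) + C * (1 + norm (w k x) powr p)"
    if "x \<in> \<Omega>" for k x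
    using fb[OF that, of k "u k x"] fb[OF that, of k "w k x"] unfolding h_def by linarith
  have hi: "integrable M (h k)" for k
  proof (rule Bochner_Integration.integrable_bound)
    show "integrable M (\<lambda>x. C * (1 + norm (u k x) powr p) + C * (1 + norm (w k x) powr p))"
      using finite_measure.integrable_const[OF finM, of "1::real"] upi[of k] wpi[of k]
      by (intro Bochner_Integration.integrable_add integrable_mult_right) auto
    show "h k \<in> borel_measurable M" unfolding h_def using fum fwm by measurable
    show "AE x in M. norm (h k x) \<le> norm (C * (1 + norm (u k x) powr p) + C * (1 + norm (w k x) powr p))"
    proof (rule AE_I2)
      fix x assume "x \<in> space M"
      then have x: "x \<in> \<Omega>" by (simp add: spM)
      have "0 \<le> C * (1 + norm (u k x) powr p) + C * (1 + norm (w k x) powr p)"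
        using assms(10) by (intro add_nonneg_nonneg mult_nonneg_nonneg) auto
      then show "norm (h k x) \<le> norm (C * (1 + norm (u k x) powr p) + C * (1 + norm (w k x) powr p))"
        using hb[OF x, of k] by simp
    qed
  qed
  have dpi: "integrable M (\<lambda>x. norm (u k x - w k x) powr p)" for k
  proof (rule Bochner_Integration.integrable_bound)
    show "integrable M (\<lambda>x. 2 powr p * (norm (u k x) powr p + norm (w k x) powr p))"
      using upi[of k] wpi[of k] by (intro Bochner_Integration.integrable_add integrable_mult_right) auto
    show "(\<lambda>x. norm (u k x - w k x) powr p) \<in> borel_measurable M" using um wm by measurable
    show "AE x in M. norm (norm (u k x - w k x) powr p) \<le> norm (2 powr p * (norm (u k x) powr p + norm (w k x) powr p))"
    proof (rule AE_I2)
      fix x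
      have "norm (u k x - w k x) powr p \<le> 2 powr p * (norm (u k x) powr p + norm (w k x) powr p)"
        by (rule pw_ineq) (use p0 norm_triangle_ineq4 in auto)
      then show "norm (norm (u k x - w k x) powr p) \<le> norm (2 powr p * (norm (u k x) powr p + norm (w k x) powr p))"
        by simp
    qed
  qed

  obtain Bu where Bu: "\<And>k. integral\<^sup>L M (\<lambda>x. norm (u k x) powr p) \<le> Bu"
  proof -
    have "\<exists>B. \<forall>k. integral\<^sup>L (lebesgue_on \<Omega>) (\<lambda>x. norm (u k x) powr p) \<le> B"
    proof (rule ui_bound[OF \<Omega>s assms(2)])
      show "integrable (lebesgue_on \<Omega>) (\<lambda>x. norm (u k x) powr p)" for k using upi unfolding M_def .
      show "\<exists>\<delta>>0. \<forall>E. E \<in> sets lebesgue \<and> E \<subseteq> \<Omega> \<and> measure lebesgue E < \<delta> \<longrightarrow>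
               (\<forall>k. integral\<^sup>L (lebesgue_on E) (\<lambda>x. norm (u k x) powr p) < 1)"
        using assms(16) unfolding p_equiintegrable_def by simp
    qed auto
    then show thesis using that unfolding M_def by blast
  qed
  obtain Bw where Bw: "\<And>k. integral\<^sup>L M (\<lambda>x. norm (w k x) powr p) \<le> Bw"
  proof -
    have "\<exists>B. \<forall>k. integral\<^sup>L (lebesgue_on \<Omega>) (\<lambda>x. norm (w k x) powr p) \<le> B"
    proof (rule ui_bound[OF \<Omega>s assms(2)])
      show "integrable (lebesgue_on \<Omega>) (\<lambda>x. norm (w k x) powr p)" for k using wpi unfolding M_def .
      show "\<exists>\<delta>>0. \<forall>E. E \<in> sets lebesgue \<and> E \<subseteq> \<Omega> \<and> measure lebesgue E < \<delta> \<longrightarrow>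
               (\<forall>k. integral\<^sup>L (lebesgue_on E) (\<lambda>x. norm (w k x) powr p) < 1)"
        using assms(17) unfolding p_equiintegrable_def by simp
    qed auto
    then show thesis using that unfolding M_def by blast
  qed

  show ?thesis
  proof (rule LIMSEQ_I)
    fix r :: real assume r: "r > 0"
    define mu where "mu = measure lebesgue \<Omega>"
    have mu0: "mu \<ge> 0" unfolding mu_def by simp
    define e1 where "e1 = r / (4 * (mu + 1))"
    define e2 where "e2 = r / (8 * C)"
    have e1: "e1 > 0" and e2: "e2 > 0" using r mu0 assms(10) by (auto simp: e1_def e2_def)
    obtain du where du: "du > 0" and Hu: "\<And>E k. E \<in> sets lebesgue \<Longrightarrow> E \<subseteq> \<Omega> \<Longrightarrow> measure lebesgue E < du
        \<Longrightarrow> integral\<^sup>L (lebesgue_on E) (\<lambda>x. norm (u k x) powr p) < e2"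
      using assms(16) e2 unfolding p_equiintegrable_def by meson
    obtain dw where dw: "dw > 0" and Hw: "\<And>E k. E \<in> sets lebesgue \<Longrightarrow> E \<subseteq> \<Omega> \<Longrightarrow> measure lebesgue E < dw
        \<Longrightarrow> integral\<^sup>L (lebesgue_on E) (\<lambda>x. norm (w k x) powr p) < e2"
      using assms(17) e2 unfolding p_equiintegrable_def by meson
    define \<delta> where "\<delta> = min (min du dw) (r / (8 * C))"
    have \<delta>: "\<delta> > 0" "\<delta> \<le> du" "\<delta> \<le> dw" "\<delta> \<le> r / (8*C)" using du dw r assms(10) by (auto simp: \<delta>_def)
    obtain T where T: "closed T" "T \<subseteq> \<Omega>" "\<Omega> - T \<in> lmeasurable" "emeasure lebesgue (\<Omega> - T) < ennreal (\<delta>/4)"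
      using sets_lebesgue_inner_closed[OF \<Omega>s, of "\<delta>/4"] \<delta> by auto
    have Tc: "compact T" using T(1,2) assms(2) bounded_subset compact_eq_bounded_closed by blast
    have mT: "measure M (\<Omega> - T) < \<delta>/4"
    proof -
      have "emeasure lebesgue (\<Omega> - T) = ennreal (measure lebesgue (\<Omega> - T))"
        using T(3) by (simp add: emeasure_eq_measure2)
      then have "measure lebesgue (\<Omega> - T) < \<delta>/4" using T(4) \<delta> by (simp add: ennreal_less_iff)
      then show ?thesis using mM[of "\<Omega> - T"] T(3) by (auto simp: fmeasurableD)
    qed
    define B where "B = max (max Bu Bw) 0"
    define Mb where "Mb = 4 * B / \<delta> + 1"
    have B0: "B \<ge> 0" "Bu \<le> B" "Bw \<le> B" by (auto simp: B_def)
    have Mb1: "Mb \<ge> 1" using B0 \<delta> by (simp add: Mb_def)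
    have MbB: "B < Mb * (\<delta> / 4)" using \<delta> by (simp add: Mb_def field_simps)
    have Mbp: "Mb \<le> Mb powr p" using powr_mono[of 1 p Mb] Mb1 assms(5) by simp
    have Mbp0: "Mb powr p > 0" using Mb1 by simp
    have Mbd: "Mb * (\<delta> / 4) \<le> Mb powr p * (\<delta> / 4)" by (rule mult_right_mono) (use Mbp \<delta> in auto)
    obtain \<eta> where \<eta>: "\<eta> > 0" and UC: "\<And>x z \<xi> \<xi>'. x \<in> T \<Longrightarrow> z \<in> P \<Longrightarrow> norm \<xi> \<le> Mb \<Longrightarrow> norm \<xi>' \<le> Mb
        \<Longrightarrow> dist \<xi> \<xi>' < \<eta> \<Longrightarrow> \<bar>f x z \<xi> - f x z \<xi>'\<bar> < e1"
      using unif_cont_xi[OF assms(7) Tc T(2) P e1, of Mb] by blast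
    define \<tau> where "\<tau> = \<eta> powr p * (\<delta> / 4)"
    have \<tau>: "\<tau> > 0" using \<eta> \<delta> by (simp add: \<tau>_def)
    define t where "t = \<tau> powr (1/p)"
    have t: "t > 0" using \<tau> by (simp add: t_def)
    have tp: "t powr p = \<tau>" using \<tau> p0 by (simp add: t_def powr_powr)
    obtain N where N: "\<And>k. k \<ge> N \<Longrightarrow> norm (Lp_norm \<Omega> p (\<lambda>x. u k x - w k x) - 0) < t"
      using LIMSEQ_D[OF assms(18) t] by blast
    define I where "I k = integral\<^sup>L M (\<lambda>x. norm (u k x - w k x) powr p)" for k
    have I0: "I k \<ge> 0" for k unfolding I_def by (rule integral_nonneg_AE) simp
    have Ik: "I k < \<tau>" if "k \<ge> N" for k
    proof -
      have L: "Lp_norm \<Omega> p (\<lambda>x. u k x - w k x) = I k powr (1/p)" unfolding Lp_norm_def I_def M_def ..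
      have "I k = (I k powr (1/p)) powr p" using I0[of k] p0 by (simp add: powr_powr)
      also have "\<dots> < t powr p" using N[OF that] L p0 by (intro powr_less_mono2) auto
      finally show ?thesis using tp by simp
    qed
    show "\<exists>N. \<forall>k\<ge>N. norm (integral\<^sup>L (lebesgue_on \<Omega>)
            (\<lambda>x. f x (R *v ((1 / eps k) *\<^sub>R x)) (u k x)
               - f x (R *v ((1 / eps k) *\<^sub>R x)) (w k x)) - 0) < r"
    proof (intro exI[of _ N] allI impI)
      fix k assume k: "N \<le> k"
      define S1 where "S1 = {x \<in> space M. Mb \<le> norm (u k x)}"
      define S2 where "S2 = {x \<in> space M. Mb \<le> norm (w k x)}"
      define S3 where "S3 = {x \<in> space M. \<eta> \<le> norm (u k x - w k x)}"
      define E where "E = (\<Omega> - T) \<union> S1 \<union> S2 \<union> S3"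
      have S1m: "S1 \<in> sets M" unfolding S1_def using um by measurable
      have S2m: "S2 \<in> sets M" unfolding S2_def using wm by measurable
      have S3m: "S3 \<in> sets M" unfolding S3_def using um wm by measurable
      have OTm: "\<Omega> - T \<in> sets M" using sM T(3) by (auto simp: fmeasurableD)
      have Em: "E \<in> sets M" unfolding E_def using S1m S2m S3m OTm by auto
      have ES: "E \<subseteq> \<Omega>" and Eleb: "E \<in> sets lebesgue" using Em sM by auto
      have mS1: "measure M S1 < \<delta>/4"
      proof -
        have "Mb powr p * measure M S1 \<le> integral\<^sup>L M (\<lambda>x. norm (u k x) powr p)"
        proof (rule cheb[OF finM upi S1m])
          show "Mb powr p \<le> norm (u k x) powr p" if "x \<in> S1" for x
            using that Mb1 p0 unfolding S1_def by (intro powr_mono2) auto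
        qed auto
        also have "\<dots> \<le> Bu" by (rule Bu)
        finally have "Mb powr p * measure M S1 < Mb powr p * (\<delta>/4)" using B0 MbB Mbd by linarith
        then show ?thesis using Mbp0 by simp
      qed
      have mS2: "measure M S2 < \<delta>/4"
      proof -
        have "Mb powr p * measure M S2 \<le> integral\<^sup>L M (\<lambda>x. norm (w k x) powr p)"
        proof (rule cheb[OF finM wpi S2m])
          show "Mb powr p \<le> norm (w k x) powr p" if "x \<in> S2" for x
            using that Mb1 p0 unfolding S2_def by (intro powr_mono2) auto
        qed auto
        also have "\<dots> \<le> Bw" by (rule Bw)
        finally have "Mb powr p * measure M S2 < Mb powr p * (\<delta>/4)" using B0 MbB Mbd by linarith
        then show ?thesis using Mbp0 by simp
      qed
      have mS3: "measure M S3 < \<delta>/4"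
      proof -
        have "\<eta> powr p * measure M S3 \<le> I k" unfolding I_def
        proof (rule cheb[OF finM dpi S3m])
          show "\<eta> powr p \<le> norm (u k x - w k x) powr p" if "x \<in> S3" for x
            using that \<eta> p0 unfolding S3_def by (intro powr_mono2) auto
        qed auto
        also have "\<dots> < \<eta> powr p * (\<delta>/4)" using Ik[OF k] unfolding \<tau>_def .
        finally show ?thesis using \<eta> by simp
      qed
      have mE: "measure M E < \<delta>"
      proof -
        have "measure M E \<le> measure M ((\<Omega> - T) \<union> S1 \<union> S2) + measure M S3"
          unfolding E_def using OTm S1m S2m S3m by (intro measure_Un_le) auto
        also have "measure M ((\<Omega> - T) \<union> S1 \<union> S2) \<le> measure M ((\<Omega> - T) \<union> S1) + measure M S2"
          using OTm S1m S2m by (intro measure_Un_le) auto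
        also have "measure M ((\<Omega> - T) \<union> S1) \<le> measure M (\<Omega> - T) + measure M S1"
          using OTm S1m by (intro measure_Un_le) auto
        finally show ?thesis using mT mS1 mS2 mS3 by linarith
      qed
      define G where "G x = e1 + 2 * C * indicator E x + C * (indicator E x * norm (u k x) powr p)
          + C * (indicator E x * norm (w k x) powr p)" for x
      have pb: "\<bar>h k x\<bar> \<le> G x" if x: "x \<in> space M" for x
      proof (cases "x \<in> E")
        case True
        then show ?thesis using hb[of x k] x e1 spM by (simp add: G_def algebra_simps)
      next
        case False
        then have xT: "x \<in> T" and nu: "norm (u k x) < Mb" and nw: "norm (w k x) < Mb"
          and nd: "norm (u k x - w k x) < \<eta>"
          using x spM unfolding E_def S1_def S2_def S3_def by auto
        obtain z' where "z' \<in> P" and zz: "\<forall>x'\<in>\<Omega>. \<forall>\<xi>. f x' (y k x) \<xi> = f x' z' \<xi>"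
          using fper[of "y k x"] by blast
        have "\<bar>h k x\<bar> = \<bar>f x z' (u k x) - f x z' (w k x)\<bar>" using zz x spM unfolding h_def by auto
        also have "\<dots> < e1"
          by (rule UC) (use xT \<open>z' \<in> P\<close> nu nw nd in \<open>auto simp: dist_norm\<close>)
        finally show ?thesis using False by (simp add: G_def)
      qed
      have iE: "integrable M (indicator E :: _ \<Rightarrow> real)"
        using Em finite_measure.emeasure_finite[OF finM, of E] by (auto simp: top.not_eq_extremum)
      have iEu: "integrable M (\<lambda>x. indicator E x * norm (u k x) powr p)"
        using integrable_mult_indicator[OF Em upi[of k]] by simp
      have iEw: "integrable M (\<lambda>x. indicator E x * norm (w k x) powr p)"
        using integrable_mult_indicator[OF Em wpi[of k]] by simp
      have ic: "integrable M (\<lambda>x. e1)" by (rule finite_measure.integrable_const[OF finM])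
      have Gi: "integrable M G" unfolding G_def using ic iE iEu iEw
        by (intro Bochner_Integration.integrable_add integrable_mult_right) auto
      have aU: "integral\<^sup>L M (\<lambda>x. indicator E x * norm (u k x) powr p) < e2"
      proof -
        have "integral\<^sup>L M (\<lambda>x. indicator E x * norm (u k x) powr p) = integral\<^sup>L (lebesgue_on E) (\<lambda>x. norm (u k x) powr p)"
          unfolding M_def using lebesgue_on_sub(1)[OF \<Omega>s ES Eleb] by simp
        also have "\<dots> < e2" by (rule Hu[OF Eleb ES]) (use mE mM[OF ES Eleb] \<delta> in simp)
        finally show ?thesis .
      qed
      have aW: "integral\<^sup>L M (\<lambda>x. indicator E x * norm (w k x) powr p) < e2"
      proof -
        have "integral\<^sup>L M (\<lambda>x. indicator E x * norm (w k x) powr p) = integral\<^sup>L (lebesgue_on E) (\<lambda>x. norm (w k x) powr p)"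
          unfolding M_def using lebesgue_on_sub(1)[OF \<Omega>s ES Eleb] by simp
        also have "\<dots> < e2" by (rule Hw[OF Eleb ES]) (use mE mM[OF ES Eleb] \<delta> in simp)
        finally show ?thesis .
      qed
      have intG: "integral\<^sup>L M G = e1 * mu + 2 * C * measure M E
          + C * integral\<^sup>L M (\<lambda>x. indicator E x * norm (u k x) powr p)
          + C * integral\<^sup>L M (\<lambda>x. indicator E x * norm (w k x) powr p)"
      proof -
        have EE: "E \<inter> space M = E" using ES spM by auto
        have mO: "measure M \<Omega> = mu" unfolding mu_def using mM[of \<Omega>] \<Omega>s by simp
        show ?thesis unfolding G_def using ic iE iEu iEw EE mO spM
          by (simp add: Bochner_Integration.integral_add integrable_mult_right)
      qed
      have t1: "e1 * mu \<le> r/4"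
      proof -
        have "mu / (mu + 1) \<le> 1" using mu0 by simp
        then have "r/4 * (mu / (mu + 1)) \<le> r/4 * 1" using r by (intro mult_left_mono) auto
        moreover have "e1 * mu = r/4 * (mu / (mu + 1))" unfolding e1_def using mu0 by (simp add: field_simps)
        ultimately show ?thesis by simp
      qed
      have t2: "2 * C * measure M E < r/4"
      proof -
        have "2 * C * measure M E < 2 * C * \<delta>" using mE assms(10) by simp
        also have "\<dots> \<le> 2 * C * (r / (8 * C))" using \<delta>(4) assms(10) by (intro mult_left_mono) auto
        also have "\<dots> = r / 4" using assms(10) by simp
        finally show ?thesis .
      qed
      have ce2: "C * e2 = r / 8" unfolding e2_def using assms(10) by simp
      have t3: "C * integral\<^sup>L M (\<lambda>x. indicator E x * norm (u k x) powr p) < r/8"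
        using aU assms(10) ce2 by (metis mult_strict_left_mono)
      have t4: "C * integral\<^sup>L M (\<lambda>x. indicator E x * norm (w k x) powr p) < r/8"
        using aW assms(10) ce2 by (metis mult_strict_left_mono)
      have "\<bar>integral\<^sup>L M (h k)\<bar> \<le> integral\<^sup>L M G"
        by (rule integral_abs_bound_integral[OF hi Gi pb])
      also have "\<dots> < r" unfolding intG using t1 t2 t3 t4 r by linarith
      finally have "\<bar>integral\<^sup>L M (h k)\<bar> < r" .
      moreover have "integral\<^sup>L (lebesgue_on \<Omega>)
            (\<lambda>x. f x (R *v ((1 / eps k) *\<^sub>R x)) (u k x)
               - f x (R *v ((1 / eps k) *\<^sub>R x)) (w k x)) = integral\<^sup>L M (h k)"
        unfolding M_def h_def y_def ..
      ultimately show "norm (integral\<^sup>L (lebesgue_on \<Omega>)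
            (\<lambda>x. f x (R *v ((1 / eps k) *\<^sub>R x)) (u k x)
               - f x (R *v ((1 / eps k) *\<^sub>R x)) (w k x)) - 0) < r" by simp
    qed
  qed
qed

end
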